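(* For any real continuous function $f\in C(\Omega)$, $$|f-f\circ\sigma|_\infty=|Kf-f|_\infty\ \ge\ \|[\mathcal D,\pi(M_f)]\|\ \ge\ |f-Lf|_\infty.$$ Moreover, if $f$ does not depend on the first coordinate (i.e. $f(x)=f(y)$ whenever $x_i=y_i$ for all $i\ge2$), both inequalities are equalities.
   Context: $\Omega=\{0,1\}^{\mathbb N}$ with the shift $\sigma$; for $a\in\{0,1\}$, $ax=(a,x_1,\dots)$. $\mu$ is the measure of maximal entropy (uniform Bernoulli product measure), $L^2(\mu)$ the Hilbert space of square-integrable functions. $|\cdot|_\infty$ is the supremum norm. Ruelle operator $L\phi(x)=\frac12(\phi(0x)+\phi(1x))$; Koopman operator $K\phi=\phi\circ\sigma$. For $f\in C(\Omega)$, $M_f$ is the multiplication operator $g\mapsto fg$ on $L^2(\mu)$. On $\mathcal H=L^2(\mu)\times L^2(\mu)$ (norm $|(\phi_1,\phi_2)|^2=|\phi_1|^2+|\phi_2|^2$), $\mathcal D=\begin{pmatrix}0&K\\ L&0\end{pmatrix}$ and $\pi(A)=\begin{pmatrix}A&0\\0&A\end{pmatrix}$; $[\mathcal D,\pi(A)]=\mathcal D\pi(A)-\pi(A)\mathcal D$. $\|\cdot\|$ is the operator norm. *)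

theory Defs
  imports "HOL-Probability.Probability"
begin

text \<open>The full one-sided shift space Omega = {0,1}^N, represented as nat => bool
  (coordinate x_1 of the paper is index 0; the symbol 0 is False, 1 is True).\<close>

type_synonym omega = "nat \<Rightarrow> bool"

definition OmegaTop :: "omega topology" where
  "OmegaTop = product_topology (\<lambda>_. discrete_topology (UNIV :: bool set)) UNIV"

definition shift :: "omega \<Rightarrow> omega" where
  "shift x = (\<lambda>n. x (Suc n))"

definition cons_sym :: "bool \<Rightarrow> omega \<Rightarrow> omega" where
  "cons_sym a x = (\<lambda>n. case n of 0 \<Rightarrow> a | Suc m \<Rightarrow> x m)"

definition mu :: "omega measure" where
  "mu = PiM UNIV (\<lambda>_::nat. measure_pmf (bernoulli_pmf (1/2)))"

definition supn :: "(omega \<Rightarrow> real) \<Rightarrow> real" where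
  "supn g = (SUP x. \<bar>g x\<bar>)"

definition Koop :: "(omega \<Rightarrow> 'a) \<Rightarrow> omega \<Rightarrow> 'a" where
  "Koop \<phi> = \<phi> \<circ> shift"

definition Ruelle :: "(omega \<Rightarrow> 'a::field) \<Rightarrow> omega \<Rightarrow> 'a" where
  "Ruelle \<phi> x = (\<phi> (cons_sym False x) + \<phi> (cons_sym True x)) / 2"

text \<open>Complex L^2(mu), represented by square-integrable measurable representatives.\<close>
type_synonym l2 = "omega \<Rightarrow> complex"

definition L2 :: "l2 set" where
  "L2 = {\<phi>. \<phi> \<in> borel_measurable mu \<and> integrable mu (\<lambda>x. (cmod (\<phi> x))\<^sup>2)}"

definition L2norm :: "l2 \<Rightarrow> real" where
  "L2norm \<phi> = sqrt (\<integral>x. (cmod (\<phi> x))\<^sup>2 \<partial>mu)"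

definition Mult :: "(omega \<Rightarrow> real) \<Rightarrow> l2 \<Rightarrow> l2" where
  "Mult f \<phi> = (\<lambda>x. complex_of_real (f x) * \<phi> x)"

type_synonym hvec = "l2 \<times> l2"

definition Hspace :: "hvec set" where
  "Hspace = L2 \<times> L2"

definition Hnorm :: "hvec \<Rightarrow> real" where
  "Hnorm v = sqrt ((L2norm (fst v))\<^sup>2 + (L2norm (snd v))\<^sup>2)"

definition Dirac :: "hvec \<Rightarrow> hvec" where
  "Dirac v = (Koop (snd v), Ruelle (fst v))"

definition piop :: "(l2 \<Rightarrow> l2) \<Rightarrow> hvec \<Rightarrow> hvec" where
  "piop A v = (A (fst v), A (snd v))"

definition commut :: "(hvec \<Rightarrow> hvec) \<Rightarrow> (hvec \<Rightarrow> hvec) \<Rightarrow> hvec \<Rightarrow> hvec" where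
  "commut D P v = (\<lambda>x. fst (D (P v)) x - fst (P (D v)) x,
                   \<lambda>x. snd (D (P v)) x - snd (P (D v)) x)"

definition opnorm :: "(hvec \<Rightarrow> hvec) \<Rightarrow> real" where
  "opnorm T = (SUP v \<in> {v \<in> Hspace. Hnorm v \<le> 1}. Hnorm (T v))"

end

theory Submission
  imports Defs
begin

abbreviation "BB \<equiv> measure_pmf (bernoulli_pmf (1/2))"

interpretation SQ: sequence_space BB by unfold_locales

lemma mu_eq: "mu = SQ.S" by (simp add: mu_def)

lemma space_mu[simp]: "space mu = UNIV"
  by (auto simp: mu_def space_PiM)

lemma prob_mu: "prob_space mu"
  unfolding mu_eq by (rule SQ.P.prob_space_axioms)

lemma cons_case: "cons_sym a x = case_nat a x"
  by (auto simp: cons_sym_def fun_eq_iff split: nat.split)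

lemma meas_cons[measurable]: "cons_sym a \<in> measurable mu mu"
  unfolding cons_case mu_eq
  by (intro measurable_PiM_single') (auto split: nat.split simp: space_PiM)

lemma meas_shift[measurable]: "shift \<in> measurable mu mu"
  unfolding shift_def mu_eq
  by (intro measurable_PiM_single') (auto simp: space_PiM)

lemma nn_mu_split:
  assumes [measurable]: "g \<in> borel_measurable mu"
  shows "(\<integral>\<^sup>+y. g y \<partial>mu) = (\<integral>\<^sup>+a. (\<integral>\<^sup>+x. g (cons_sym a x) \<partial>mu) \<partial>BB)"
proof -
  interpret P: pair_sigma_finite BB "\<Pi>\<^sub>M i::nat\<in>UNIV. BB" ..
  have gm: "g \<in> borel_measurable SQ.S" using assms mu_eq by simp
  have "(\<integral>\<^sup>+y. g y \<partial>mu) = (\<integral>\<^sup>+X. g ((\<lambda>(s, \<omega>). case_nat s \<omega>) X) \<partial>(BB \<Otimes>\<^sub>M SQ.S))"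
    unfolding mu_eq using gm by (subst SQ.PiM_iter[symmetric]) (simp add: nn_integral_distr)
  also have "\<dots> = (\<integral>\<^sup>+a. \<integral>\<^sup>+X. g ((\<lambda>(s, \<omega>). case_nat s \<omega>) (a, X)) \<partial>SQ.S \<partial>BB)"
  proof -
    have m: "(\<lambda>X. g ((\<lambda>(s, \<omega>). case_nat s \<omega>) X)) \<in> borel_measurable (BB \<Otimes>\<^sub>M SQ.S)"
      using gm by measurable
    have sf: "sigma_finite_measure SQ.S"
      by (rule prob_space_imp_sigma_finite) (rule SQ.P.prob_space_axioms)
    show ?thesis using sigma_finite_measure.nn_integral_fst[OF sf m] by simp
  qed
  finally show ?thesis by (simp add: cons_case mu_eq)
qed

lemma nn_mu_cons:
  assumes [measurable]: "g \<in> borel_measurable mu"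
  shows "(\<integral>\<^sup>+y. g y \<partial>mu) = ((\<integral>\<^sup>+x. g (cons_sym False x) \<partial>mu) + (\<integral>\<^sup>+x. g (cons_sym True x) \<partial>mu)) / 2"
  unfolding nn_mu_split[OF assms]
  apply (subst nn_integral_measure_pmf_finite)
  apply (auto simp: UNIV_bool divide_ennreal_def distrib_right)
  done

lemma nn_shift:
  assumes [measurable]: "g \<in> borel_measurable mu"
  shows "(\<integral>\<^sup>+y. g (shift y) \<partial>mu) = (\<integral>\<^sup>+y. g y \<partial>mu)"
proof -
  have sc: "shift (cons_sym a x) = x" for a x by (simp add: shift_def cons_sym_def)
  have "(\<integral>\<^sup>+y. g (shift y) \<partial>mu) = (\<integral>\<^sup>+a. (\<integral>\<^sup>+x. g x \<partial>mu) \<partial>BB)"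
    by (subst nn_mu_split) (auto simp: sc)
  also have "\<dots> = (\<integral>\<^sup>+x. g x \<partial>mu)"
    by (simp add: measure_pmf.emeasure_space_1)
  finally show ?thesis .
qed

definition cyl :: "nat \<Rightarrow> omega \<Rightarrow> omega set" where
  "cyl n x0 = {y. \<forall>i<n. y i = x0 i}"

lemma cyl_emb: "cyl n x0 = prod_emb UNIV (\<lambda>_. BB) {..<n} (Pi\<^sub>E {..<n} (\<lambda>i. {x0 i}))"
  by (rule set_eqI) (simp add: cyl_def prod_emb_iff PiE_iff extensional_UNIV Ball_def)

lemma cyl_sets[measurable]: "cyl n x0 \<in> sets mu"
  unfolding cyl_emb mu_def
  by (intro sets_PiM_I) auto

lemma cyl_emeasure: "emeasure mu (cyl n x0) = ennreal ((1/2)^n)"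
proof -
  have "emeasure mu (cyl n x0) = (\<Prod>i\<in>{..<n}. emeasure BB {x0 i})"
    unfolding cyl_emb mu_def
    by (rule emeasure_PiM_emb) (auto intro: prob_space_measure_pmf)
  also have "\<dots> = (\<Prod>i\<in>{..<n}. ennreal (1/2))"
    by (intro prod.cong refl) (auto simp: emeasure_pmf_single)
  also have "\<dots> = ennreal (\<Prod>i\<in>{..<n}. 1/2)"
    by (subst prod_ennreal) auto
  finally show ?thesis by simp
qed

lemma cyl_measure: "measure mu (cyl n x0) = (1/2)^n"
  unfolding measure_def cyl_emeasure by simp

lemma topspace_Omega[simp]: "topspace OmegaTop = UNIV"
  by (simp add: OmegaTop_def)

lemma open_cyl:
  assumes "openin OmegaTop S" "x \<in> S"
  shows "\<exists>n. cyl n x \<subseteq> S"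
proof -
  obtain U where U: "finite {i. U i \<noteq> UNIV}" "x \<in> Pi\<^sub>E UNIV U" "Pi\<^sub>E UNIV U \<subseteq> S"
    using assms unfolding OmegaTop_def openin_product_topology_alt by auto
  obtain n where n: "{i. U i \<noteq> UNIV} \<subseteq> {..<n}"
    using U(1) finite_nat_bounded by blast
  have "cyl n x \<subseteq> Pi\<^sub>E UNIV U"
  proof
    fix y assume y: "y \<in> cyl n x"
    show "y \<in> Pi\<^sub>E UNIV U"
    proof (auto simp: PiE_iff)
      fix i show "y i \<in> U i"
      proof (cases "i < n")
        case True then show ?thesis using y U(2) by (auto simp: cyl_def)
      next
        case False then have "U i = UNIV" using n by auto
        then show ?thesis by simp
      qed
    qed
  qed
  with U(3) show ?thesis by blast
qed

lemma cont_cyl: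
  assumes "continuous_map OmegaTop euclideanreal f" "e > 0"
  shows "\<exists>n. \<forall>y\<in>cyl n x. \<bar>f y - f x\<bar> < e"
proof -
  have "openin OmegaTop {y \<in> topspace OmegaTop. f y \<in> ball (f x) e}"
    using assms(1) unfolding continuous_map_def by auto
  then have "openin OmegaTop (f -` ball (f x) e)" by (simp add: vimage_def)
  moreover have "x \<in> f -` ball (f x) e" using assms(2) by simp
  ultimately obtain n where "cyl n x \<subseteq> f -` ball (f x) e"
    using open_cyl by blast
  then have "\<forall>y\<in>cyl n x. \<bar>f y - f x\<bar> < e"
    by (auto simp: dist_real_def abs_minus_commute subset_eq)
  then show ?thesis by blast
qed

lemma cont_meas:
  assumes "continuous_map OmegaTop euclideanreal f"
  shows "f \<in> borel_measurable mu"
proof (rule borel_measurableI)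
  fix T :: "real set" assume "open T"
  then have op: "openin OmegaTop (f -` T)"
    using assms unfolding continuous_map_def by (auto simp: vimage_def)
  define C where "C l = cyl (length l) (\<lambda>i. l ! i)" for l :: "bool list"
  have eq: "f -` T = (\<Union>l\<in>{l. C l \<subseteq> f -` T}. C l)"
  proof
    show "f -` T \<subseteq> (\<Union>l\<in>{l. C l \<subseteq> f -` T}. C l)"
    proof
      fix x assume x: "x \<in> f -` T"
      from open_cyl[OF op x] obtain n where n: "cyl n x \<subseteq> f -` T" by blast
      have "C (map x [0..<n]) = cyl n x" by (auto simp: C_def cyl_def)
      with n show "x \<in> (\<Union>l\<in>{l. C l \<subseteq> f -` T}. C l)"
        by (intro UN_I[of "map x [0..<n]"]) (auto simp: cyl_def)
    qed
    show "(\<Union>l\<in>{l. C l \<subseteq> f -` T}. C l) \<subseteq> f -` T"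
      by (rule UN_least) simp
  qed
  have "(\<Union>l\<in>{l. C l \<subseteq> f -` T}. C l) \<in> sets mu"
    by (rule sets.countable_UN) (simp add: C_def image_subset_iff cyl_sets)
  then show "f -` T \<inter> space mu \<in> sets mu"
    using eq by simp
qed

lemma nn_mu_split2:
  assumes [measurable]: "g \<in> borel_measurable mu"
  shows "(\<integral>\<^sup>+y. g y \<partial>mu) = (\<integral>\<^sup>+x. (\<integral>\<^sup>+a. g (cons_sym a x) \<partial>BB) \<partial>mu)"
proof -
  interpret P: pair_sigma_finite BB "\<Pi>\<^sub>M i::nat\<in>UNIV. BB" ..
  have gm: "g \<in> borel_measurable SQ.S" using assms mu_eq by simp
  have "(\<integral>\<^sup>+y. g y \<partial>mu) = (\<integral>\<^sup>+X. g ((\<lambda>(s, \<omega>). case_nat s \<omega>) X) \<partial>(BB \<Otimes>\<^sub>M SQ.S))"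
    unfolding mu_eq using gm by (subst SQ.PiM_iter[symmetric]) (simp add: nn_integral_distr)
  also have "\<dots> = (\<integral>\<^sup>+X. \<integral>\<^sup>+a. g ((\<lambda>(s, \<omega>). case_nat s \<omega>) (a, X)) \<partial>BB \<partial>SQ.S)"
  proof -
    have m: "(\<lambda>X. g ((\<lambda>(s, \<omega>). case_nat s \<omega>) X)) \<in> borel_measurable (BB \<Otimes>\<^sub>M SQ.S)"
      using gm by measurable
    show ?thesis using P.nn_integral_snd[OF m] by simp
  qed
  finally show ?thesis by (simp add: cons_case mu_eq)
qed

lemma half_sum:
  fixes p q :: real
  assumes "0 \<le> p" "0 \<le> q"
  shows "ennreal p * ennreal (1/2) + ennreal q * ennreal (1/2) = ennreal ((p + q) / 2)"
proof -
  have "ennreal p * ennreal (1/2) = ennreal (p/2)" using assms by (subst ennreal_mult[symmetric]) auto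
  moreover have "ennreal q * ennreal (1/2) = ennreal (q/2)" using assms by (subst ennreal_mult[symmetric]) auto
  moreover have "ennreal (p/2) + ennreal (q/2) = ennreal ((p+q)/2)"
    using assms by (subst ennreal_plus[symmetric]) (auto simp: add_divide_distrib)
  ultimately show ?thesis by simp
qed

lemma nn_mu_avg:
  fixes g :: "omega \<Rightarrow> real"
  assumes [measurable]: "g \<in> borel_measurable mu" and nn: "\<And>x. 0 \<le> g x"
  shows "(\<integral>\<^sup>+y. ennreal (g y) \<partial>mu) = (\<integral>\<^sup>+x. ennreal ((g (cons_sym False x) + g (cons_sym True x)) / 2) \<partial>mu)"
proof -
  have "(\<integral>\<^sup>+y. ennreal (g y) \<partial>mu) = (\<integral>\<^sup>+x. (\<integral>\<^sup>+a. ennreal (g (cons_sym a x)) \<partial>BB) \<partial>mu)"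
    by (rule nn_mu_split2) measurable
  also have "\<dots> = (\<integral>\<^sup>+x. ennreal ((g (cons_sym False x) + g (cons_sym True x)) / 2) \<partial>mu)"
  proof (rule nn_integral_cong)
    fix x
    have "(\<integral>\<^sup>+a. ennreal (g (cons_sym a x)) \<partial>BB) = ennreal (g (cons_sym False x)) * ennreal (1/2) + ennreal (g (cons_sym True x)) * ennreal (1/2)"
      by (subst nn_integral_measure_pmf_finite) (auto simp: UNIV_bool)
    also have "\<dots> = ennreal ((g (cons_sym False x) + g (cons_sym True x)) / 2)"
      using nn[of "cons_sym False x"] nn[of "cons_sym True x"] half_sum by blast
    finally show "(\<integral>\<^sup>+a. ennreal (g (cons_sym a x)) \<partial>BB) = ennreal ((g (cons_sym False x) + g (cons_sym True x)) / 2)" .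
  qed
  finally show ?thesis .
qed

lemma commut_formula:
  "commut Dirac (piop (Mult f)) (p1, p2) =
    (\<lambda>x. complex_of_real (f (shift x) - f x) * p2 (shift x),
     \<lambda>x. (complex_of_real (f (cons_sym False x) - f x) * p1 (cons_sym False x)
         + complex_of_real (f (cons_sym True x) - f x) * p1 (cons_sym True x)) / 2)"
  by (auto simp: commut_def Dirac_def piop_def Mult_def Koop_def Ruelle_def fun_eq_iff field_simps)

lemma L2norm_sq:
  assumes [measurable]: "\<phi> \<in> borel_measurable mu"
  shows "(L2norm \<phi>)^2 = enn2real (\<integral>\<^sup>+x. ennreal ((cmod (\<phi> x))^2) \<partial>mu)"
  unfolding L2norm_def
  by (subst integral_eq_nn_integral) (auto simp: enn2real_nonneg)

lemma L2_nn:
  assumes "\<phi> \<in> L2"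
  shows "(\<integral>\<^sup>+x. ennreal ((cmod (\<phi> x))^2) \<partial>mu) = ennreal ((L2norm \<phi>)^2)"
proof -
  have i: "integrable mu (\<lambda>x. (cmod (\<phi> x))\<^sup>2)" using assms by (simp add: L2_def)
  have "(L2norm \<phi>)^2 = (\<integral>x. (cmod (\<phi> x))\<^sup>2 \<partial>mu)"
    unfolding L2norm_def by (simp add: integral_nonneg_AE)
  then show ?thesis using nn_integral_eq_integral[OF i] by simp
qed

lemma pw_ineq:
  fixes a b S :: real and u w :: complex
  assumes "\<bar>a\<bar> \<le> S" "\<bar>b\<bar> \<le> S"
  shows "(cmod ((complex_of_real a * u + complex_of_real b * w) / 2))^2 \<le> S^2 * (((cmod u)^2 + (cmod w)^2) / 2)"
proof -
  have "cmod ((complex_of_real a * u + complex_of_real b * w) / 2) \<le> (\<bar>a\<bar> * cmod u + \<bar>b\<bar> * cmod w) / 2"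
    using norm_triangle_ineq[of "complex_of_real a * u" "complex_of_real b * w"]
    by (simp add: norm_mult norm_divide)
  also have "\<dots> \<le> (S * cmod u + S * cmod w) / 2"
    using assms by (intro divide_right_mono add_mono mult_right_mono) auto
  finally have h: "cmod ((complex_of_real a * u + complex_of_real b * w) / 2) \<le> S * (cmod u + cmod w) / 2"
    by (simp add: algebra_simps)
  have "(cmod ((complex_of_real a * u + complex_of_real b * w) / 2))^2 \<le> (S * (cmod u + cmod w) / 2)^2"
    using h by (intro power_mono) auto
  also have "\<dots> = S^2 * ((cmod u + cmod w)^2 / 4)" by (simp add: power2_eq_square field_simps)
  also have "\<dots> \<le> S^2 * (((cmod u)^2 + (cmod w)^2) / 2)"
  proof (intro mult_left_mono)
    show "(cmod u + cmod w)\<^sup>2 / 4 \<le> ((cmod u)\<^sup>2 + (cmod w)\<^sup>2) / 2"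
    proof -
      have "0 \<le> (cmod u - cmod w)^2" by simp
      then show ?thesis by (simp add: power2_eq_square field_simps algebra_simps)
    qed
  qed auto
  finally show ?thesis .
qed

lemma cont_bounded:
  assumes "continuous_map OmegaTop euclideanreal f"
  shows "\<exists>B. \<forall>x. \<bar>f x\<bar> \<le> B"
proof -
  have "compact_space OmegaTop"
    unfolding OmegaTop_def compact_space_product_topology
    by (simp add: compact_space_discrete_topology)
  then have "compactin OmegaTop UNIV" by (simp add: compact_space_def)
  from image_compactin[OF this assms] have "compact (range f)" by simp
  then have "bounded (range f)" by (rule compact_imp_bounded)
  then show ?thesis unfolding bounded_real by auto
qed

lemma upper:
  assumes fm[measurable]: "f \<in> borel_measurable mu"
    and Sb: "\<And>x. \<bar>f (shift x) - f x\<bar> \<le> S"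
    and v: "v \<in> Hspace" "Hnorm v \<le> 1"
  shows "Hnorm (commut Dirac (piop (Mult f)) v) \<le> S"
proof -
  obtain p1 p2 where vp: "v = (p1, p2)" by (cases v)
  have p1: "p1 \<in> L2" and p2: "p2 \<in> L2" using v(1) by (auto simp: Hspace_def vp)
  have [measurable]: "p1 \<in> borel_measurable mu" "p2 \<in> borel_measurable mu"
    using p1 p2 by (auto simp: L2_def)
  have S0: "0 \<le> S" using Sb[of undefined] by linarith
  have sc: "shift (cons_sym a x) = x" for a x by (simp add: shift_def cons_sym_def)
  have fa: "\<bar>f (cons_sym a x) - f x\<bar> \<le> S" for a x
    using Sb[of "cons_sym a x"] by (simp add: sc abs_minus_commute)
  define c1 where "c1 = (\<lambda>x. complex_of_real (f (shift x) - f x) * p2 (shift x))"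
  define c2 where "c2 = (\<lambda>x. (complex_of_real (f (cons_sym False x) - f x) * p1 (cons_sym False x)
         + complex_of_real (f (cons_sym True x) - f x) * p1 (cons_sym True x)) / 2)"
  have [measurable]: "c1 \<in> borel_measurable mu" "c2 \<in> borel_measurable mu"
    unfolding c1_def c2_def by measurable
  have N1: "(\<integral>\<^sup>+x. ennreal ((cmod (c1 x))^2) \<partial>mu) \<le> ennreal (S^2) * ennreal ((L2norm p2)^2)"
  proof -
    have "(\<integral>\<^sup>+x. ennreal ((cmod (c1 x))^2) \<partial>mu) \<le> (\<integral>\<^sup>+x. ennreal (S^2) * ennreal ((cmod (p2 (shift x)))^2) \<partial>mu)"
    proof (rule nn_integral_mono)
      fix x
      have "(cmod (c1 x))^2 = (f (shift x) - f x)^2 * (cmod (p2 (shift x)))^2"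
        by (simp only: c1_def norm_mult power_mult_distrib norm_of_real power2_abs)
      also have "\<dots> \<le> S^2 * (cmod (p2 (shift x)))^2"
        using Sb[of x] S0 by (intro mult_right_mono) (auto simp: abs_le_square_iff[symmetric] power_mono)
      finally show "ennreal ((cmod (c1 x))^2) \<le> ennreal (S^2) * ennreal ((cmod (p2 (shift x)))^2)"
        by (simp add: ennreal_mult[symmetric] ennreal_leI)
    qed
    also have "\<dots> = ennreal (S^2) * (\<integral>\<^sup>+x. ennreal ((cmod (p2 (shift x)))^2) \<partial>mu)"
      by (rule nn_integral_cmult) measurable
    also have "(\<integral>\<^sup>+x. ennreal ((cmod (p2 (shift x)))^2) \<partial>mu) = (\<integral>\<^sup>+x. ennreal ((cmod (p2 x))^2) \<partial>mu)"
      by (rule nn_shift) measurable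
    also have "\<dots> = ennreal ((L2norm p2)^2)" by (rule L2_nn[OF p2])
    finally show ?thesis .
  qed
  have N2: "(\<integral>\<^sup>+x. ennreal ((cmod (c2 x))^2) \<partial>mu) \<le> ennreal (S^2) * ennreal ((L2norm p1)^2)"
  proof -
    have "(\<integral>\<^sup>+x. ennreal ((cmod (c2 x))^2) \<partial>mu) \<le> (\<integral>\<^sup>+x. ennreal (S^2) * ennreal ((((cmod (p1 (cons_sym False x)))^2 + (cmod (p1 (cons_sym True x)))^2) / 2)) \<partial>mu)"
    proof (rule nn_integral_mono)
      fix x
      have "(cmod (c2 x))^2 \<le> S^2 * ((((cmod (p1 (cons_sym False x)))^2 + (cmod (p1 (cons_sym True x)))^2) / 2))"
        unfolding c2_def by (rule pw_ineq) (rule fa)+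
      then show "ennreal ((cmod (c2 x))^2) \<le> ennreal (S^2) * ennreal ((((cmod (p1 (cons_sym False x)))^2 + (cmod (p1 (cons_sym True x)))^2) / 2))"
        by (simp add: ennreal_mult[symmetric] ennreal_leI)
    qed
    also have "\<dots> = ennreal (S^2) * (\<integral>\<^sup>+x. ennreal ((((cmod (p1 (cons_sym False x)))^2 + (cmod (p1 (cons_sym True x)))^2) / 2)) \<partial>mu)"
      by (rule nn_integral_cmult) measurable
    also have "(\<integral>\<^sup>+x. ennreal ((((cmod (p1 (cons_sym False x)))^2 + (cmod (p1 (cons_sym True x)))^2) / 2)) \<partial>mu) = (\<integral>\<^sup>+x. ennreal ((cmod (p1 x))^2) \<partial>mu)"
      by (rule nn_mu_avg[symmetric]) auto
    also have "\<dots> = ennreal ((L2norm p1)^2)" by (rule L2_nn[OF p1])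
    finally show ?thesis .
  qed
  have e1: "(L2norm c1)^2 \<le> S^2 * (L2norm p2)^2"
  proof -
    have "(L2norm c1)^2 = enn2real (\<integral>\<^sup>+x. ennreal ((cmod (c1 x))^2) \<partial>mu)" by (rule L2norm_sq) measurable
    also have "\<dots> \<le> enn2real (ennreal (S^2) * ennreal ((L2norm p2)^2))"
      by (rule enn2real_mono[OF N1]) (simp add: ennreal_mult[symmetric])
    also have "\<dots> = S^2 * (L2norm p2)^2" by (simp add: ennreal_mult[symmetric])
    finally show ?thesis .
  qed
  have e2: "(L2norm c2)^2 \<le> S^2 * (L2norm p1)^2"
  proof -
    have "(L2norm c2)^2 = enn2real (\<integral>\<^sup>+x. ennreal ((cmod (c2 x))^2) \<partial>mu)" by (rule L2norm_sq) measurable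
    also have "\<dots> \<le> enn2real (ennreal (S^2) * ennreal ((L2norm p1)^2))"
      by (rule enn2real_mono[OF N2]) (simp add: ennreal_mult[symmetric])
    also have "\<dots> = S^2 * (L2norm p1)^2" by (simp add: ennreal_mult[symmetric])
    finally show ?thesis .
  qed
  have hv: "(L2norm p1)^2 + (L2norm p2)^2 \<le> 1"
    using v(2) unfolding Hnorm_def vp by (simp add: real_sqrt_le_1_iff)
  have "(L2norm c1)^2 + (L2norm c2)^2 \<le> S^2 * ((L2norm p1)^2 + (L2norm p2)^2)"
    using e1 e2 by (simp add: algebra_simps)
  also have "\<dots> \<le> S^2 * 1" using hv by (intro mult_left_mono) auto
  finally have "sqrt ((L2norm c1)^2 + (L2norm c2)^2) \<le> sqrt (S^2)" by (intro real_sqrt_le_mono) simp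
  moreover have "commut Dirac (piop (Mult f)) v = (c1, c2)"
    unfolding vp commut_formula c1_def c2_def ..
  ultimately show ?thesis using S0 by (simp add: Hnorm_def)
qed

lemma abs_near:
  fixes A B C D E F e :: real
  assumes "\<bar>A - B\<bar> < e" "\<bar>C - D\<bar> < e" "\<bar>E - F\<bar> < e"
  shows "\<bar>B - (D + F) / 2\<bar> - 2 * e \<le> \<bar>A - (C + E) / 2\<bar>"
  using assms unfolding abs_real_def by (auto simp: field_simps split: if_splits)

lemma abs_bnd:
  fixes a b c B :: real
  assumes "\<bar>a\<bar> \<le> B" "\<bar>b\<bar> \<le> B" "\<bar>c\<bar> \<le> B"
  shows "\<bar>a - (b + c) / 2\<bar> \<le> 2 * B"
  using assms unfolding abs_real_def by (auto simp: field_simps split: if_splits)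

lemma zero_in_H: "((\<lambda>_. 0), (\<lambda>_. 0)) \<in> Hspace"
  by (simp add: Hspace_def L2_def)

lemma lower:
  assumes fc: "continuous_map OmegaTop euclideanreal f"
    and Sb: "\<And>x. \<bar>f (shift x) - f x\<bar> \<le> S"
  shows "\<bar>f x0 - Ruelle f x0\<bar> \<le> opnorm (commut Dirac (piop (Mult f)))"
proof -
  interpret mp: prob_space mu by (rule prob_mu)
  have fm[measurable]: "f \<in> borel_measurable mu" by (rule cont_meas[OF fc])
  define T where "T = commut Dirac (piop (Mult f))"
  define OP where "OP = opnorm T"
  have bdd: "bdd_above ((\<lambda>v. Hnorm (T v)) ` {v \<in> Hspace. Hnorm v \<le> 1})"
    using upper[OF fm Sb] unfolding T_def by (intro bdd_aboveI[of _ S]) auto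
  have upel: "Hnorm (T v) \<le> OP" if "v \<in> Hspace" "Hnorm v \<le> 1" for v
    unfolding OP_def opnorm_def using that by (intro cSUP_upper[OF _ bdd]) auto
  have Hn0: "0 \<le> Hnorm w" for w by (simp add: Hnorm_def)
  have "Hnorm ((\<lambda>_. 0), (\<lambda>_. 0)) = 0" by (simp add: Hnorm_def L2norm_def)
  then have OP0: "0 \<le> OP"
    using upel[OF zero_in_H] Hn0 by (metis dual_order.trans order_refl zero_le_one)
  define h where "h x = f x - Ruelle f x" for x
  have sc: "shift (cons_sym a x) = x" for a x by (simp add: shift_def cons_sym_def)
  have main: "\<bar>h x0\<bar> \<le> OP + 2 * e" if e: "e > 0" for e
  proof -
    obtain n0 where n0: "\<forall>y\<in>cyl n0 x0. \<bar>f y - f x0\<bar> < e" using cont_cyl[OF fc e] by blast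
    obtain n1 where n1: "\<forall>y\<in>cyl n1 (cons_sym False x0). \<bar>f y - f (cons_sym False x0)\<bar> < e" using cont_cyl[OF fc e] by blast
    obtain n2 where n2: "\<forall>y\<in>cyl n2 (cons_sym True x0). \<bar>f y - f (cons_sym True x0)\<bar> < e" using cont_cyl[OF fc e] by blast
    define N where "N = n0 + n1 + n2"
    define C where "C = cyl N x0"
    have Cs[measurable]: "C \<in> sets mu" by (simp add: C_def)
    have near: "\<bar>h y\<bar> \<ge> \<bar>h x0\<bar> - 2 * e" if y: "y \<in> C" for y
    proof -
      have "y \<in> cyl n0 x0" using y by (auto simp: C_def cyl_def N_def)
      moreover have "cons_sym False y \<in> cyl n1 (cons_sym False x0)"
        using y by (auto simp: C_def cyl_def N_def cons_sym_def split: nat.split)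
      moreover have "cons_sym True y \<in> cyl n2 (cons_sym True x0)"
        using y by (auto simp: C_def cyl_def N_def cons_sym_def split: nat.split)
      ultimately have a: "\<bar>f y - f x0\<bar> < e" "\<bar>f (cons_sym False y) - f (cons_sym False x0)\<bar> < e"
        "\<bar>f (cons_sym True y) - f (cons_sym True x0)\<bar> < e" using n0 n1 n2 by auto
      from abs_near[OF a] show ?thesis unfolding h_def Ruelle_def .
    qed
    show ?thesis
    proof (cases "\<bar>h x0\<bar> - 2 * e \<le> 0")
      case True then show ?thesis using OP0 by linarith
    next
      case False
      define q where "q = \<bar>h x0\<bar> - 2 * e"
      have q0: "q > 0" using False q_def by linarith
      define m where "m = measure mu C"
      have m0: "m > 0" by (simp add: m_def C_def cyl_measure)
      have mC: "emeasure mu C = ennreal m" by (simp add: m_def mp.emeasure_eq_measure)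
      define c where "c = 1 / sqrt m"
      have cm: "c^2 * m = 1" using m0 by (simp add: c_def power_divide)
      define g where "g y = c * indicator C y" for y
      have [measurable]: "g \<in> borel_measurable mu" unfolding g_def by measurable
      define p1 where "p1 y = complex_of_real (g (shift y))" for y
      have [measurable]: "p1 \<in> borel_measurable mu" unfolding p1_def by measurable
      have gsq: "(g y)^2 = c^2 * indicator C y" for y by (simp add: g_def power_mult_distrib indicator_def)
      have p1L2: "p1 \<in> L2"
      proof -
        have "integrable mu (\<lambda>x. (cmod (p1 x))\<^sup>2)"
          by (rule mp.integrable_const_bound[where B="c^2"]) (auto simp: p1_def gsq indicator_def)
        then show ?thesis by (simp add: L2_def)
      qed
      have Np1: "(\<integral>\<^sup>+x. ennreal ((cmod (p1 x))^2) \<partial>mu) = ennreal 1"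
      proof -
        have "(\<integral>\<^sup>+x. ennreal ((cmod (p1 x))^2) \<partial>mu) = (\<integral>\<^sup>+x. ennreal ((g (shift x))^2) \<partial>mu)"
          by (simp add: p1_def)
        also have "\<dots> = (\<integral>\<^sup>+x. ennreal ((g x)^2) \<partial>mu)" by (rule nn_shift) measurable
        also have "\<dots> = (\<integral>\<^sup>+x. ennreal (c^2) * indicator C x \<partial>mu)"
          by (rule nn_integral_cong) (simp add: gsq indicator_def)
        also have "\<dots> = ennreal (c^2) * ennreal m" by (simp add: nn_integral_cmult_indicator mC)
        also have "\<dots> = ennreal 1" using cm m0 by (simp add: ennreal_mult[symmetric])
        finally show ?thesis .
      qed
      have Lp1: "(L2norm p1)^2 = 1" using L2norm_sq[of p1] Np1 by simp
      define v where "v = (p1, (\<lambda>_::omega. 0::complex))"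
      have vH: "v \<in> Hspace" using p1L2 by (simp add: v_def Hspace_def L2_def)
      have vn: "Hnorm v = 1" using Lp1 by (simp add: v_def Hnorm_def L2norm_def)
      define c2 where "c2 x = complex_of_real (- h x * g x)" for x
      have [measurable]: "c2 \<in> borel_measurable mu" unfolding c2_def h_def Ruelle_def by measurable
      have Tv: "T v = ((\<lambda>_. 0), c2)"
        unfolding T_def v_def commut_formula
        by (auto simp: fun_eq_iff c2_def h_def Ruelle_def p1_def sc field_simps)
      have lowN: "ennreal (q^2) \<le> (\<integral>\<^sup>+x. ennreal ((cmod (c2 x))^2) \<partial>mu)"
      proof -
        have "ennreal (q^2) = ennreal (q^2 * c^2) * ennreal m"
          using cm m0 by (simp add: ennreal_mult[symmetric])
        also have "\<dots> = (\<integral>\<^sup>+x. ennreal (q^2 * c^2) * indicator C x \<partial>mu)"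
          by (simp add: nn_integral_cmult_indicator mC)
        also have "\<dots> \<le> (\<integral>\<^sup>+x. ennreal ((cmod (c2 x))^2) \<partial>mu)"
        proof (rule nn_integral_mono)
          fix x show "ennreal (q^2 * c^2) * indicator C x \<le> ennreal ((cmod (c2 x))^2)"
          proof (cases "x \<in> C")
            case True
            have "q \<le> \<bar>h x\<bar>" using near[OF True] q_def by simp
            then have "q^2 \<le> (h x)^2" using power_mono[of q "\<bar>h x\<bar>" 2] q0 by simp
            have "(cmod (c2 x))^2 = (h x)^2 * c^2"
              using True by (simp only: c2_def norm_of_real power2_abs) (simp add: g_def power_mult_distrib)
            then have "q^2 * c^2 \<le> (cmod (c2 x))^2"
              using \<open>q^2 \<le> (h x)^2\<close> by (simp add: mult_right_mono)
            then show ?thesis using True by (simp add: ennreal_leI)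
          qed simp
        qed
        finally show ?thesis .
      qed
      have finN: "(\<integral>\<^sup>+x. ennreal ((cmod (c2 x))^2) \<partial>mu) < top"
      proof -
        obtain B where B: "\<And>x. \<bar>f x\<bar> \<le> B" using cont_bounded[OF fc] by blast
        have hb: "\<bar>h x\<bar> \<le> 2 * B" for x
          using B[of x] B[of "cons_sym False x"] B[of "cons_sym True x"]
          unfolding h_def Ruelle_def by (rule abs_bnd)
        have "(\<integral>\<^sup>+x. ennreal ((cmod (c2 x))^2) \<partial>mu) \<le> (\<integral>\<^sup>+x. ennreal ((2 * B)^2 * c^2) \<partial>mu)"
        proof (rule nn_integral_mono)
          fix x
          have "(cmod (c2 x))^2 = (h x)^2 * (g x)^2"
            by (simp only: c2_def norm_of_real power2_abs) (simp add: power_mult_distrib)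
          also have "\<dots> \<le> (2 * B)^2 * c^2"
          proof (rule mult_mono)
            show "(h x)^2 \<le> (2 * B)^2"
              using power_mono[of "\<bar>h x\<bar>" "2 * B" 2] hb[of x] by simp
            show "(g x)^2 \<le> c^2" by (simp add: gsq indicator_def)
          qed auto
          finally show "ennreal ((cmod (c2 x))^2) \<le> ennreal ((2 * B)^2 * c^2)" by (rule ennreal_leI)
        qed
        also have "\<dots> < top"
        proof -
          have "emeasure mu UNIV = 1" using mp.emeasure_space_1 by simp
          then show ?thesis by simp
        qed
        finally show ?thesis .
      qed
      have "q^2 \<le> (L2norm c2)^2"
      proof -
        have "q^2 = enn2real (ennreal (q^2))" by simp
        also have "\<dots> \<le> enn2real (\<integral>\<^sup>+x. ennreal ((cmod (c2 x))^2) \<partial>mu)"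
          by (rule enn2real_mono[OF lowN finN])
        also have "\<dots> = (L2norm c2)^2" by (rule L2norm_sq[symmetric]) measurable
        finally show ?thesis .
      qed
      then have "q \<le> Hnorm (T v)"
        using q0 by (simp add: Tv Hnorm_def L2norm_def real_le_rsqrt)
      also have "\<dots> \<le> OP" using upel[OF vH] vn by simp
      finally show ?thesis using q_def by linarith
    qed
  qed
  have "\<bar>h x0\<bar> \<le> OP"
  proof (rule field_le_epsilon)
    fix e :: real assume "0 < e"
    then show "\<bar>h x0\<bar> \<le> OP + e" using main[of "e/2"] by simp
  qed
  then show ?thesis by (simp add: h_def OP_def T_def)
qed


theorem theorem2p10:
  fixes f :: "omega \<Rightarrow> real"
  assumes "continuous_map OmegaTop euclideanreal f"
  shows "supn (\<lambda>x. f x - f (shift x)) = supn (\<lambda>x. Koop f x - f x)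
       \<and> supn (\<lambda>x. Koop f x - f x) \<ge> opnorm (commut Dirac (piop (Mult f)))
       \<and> opnorm (commut Dirac (piop (Mult f))) \<ge> supn (\<lambda>x. f x - Ruelle f x)
       \<and> ((\<forall>x y. (\<forall>i\<ge>1. x i = y i) \<longrightarrow> f x = f y) \<longrightarrow>
            supn (\<lambda>x. Koop f x - f x) = opnorm (commut Dirac (piop (Mult f)))
          \<and> opnorm (commut Dirac (piop (Mult f))) = supn (\<lambda>x. f x - Ruelle f x))"
proof -
  note fc = assms
  have fm[measurable]: "f \<in> borel_measurable mu" by (rule cont_meas[OF fc])
  obtain B where B: "\<And>x. \<bar>f x\<bar> \<le> B" using cont_bounded[OF fc] by blast
  define S where "S = supn (\<lambda>x. Koop f x - f x)"
  define R where "R = supn (\<lambda>x. f x - Ruelle f x)"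
  define OP where "OP = opnorm (commut Dirac (piop (Mult f)))"
  have bddK: "bdd_above (range (\<lambda>x. \<bar>Koop f x - f x\<bar>))"
  proof (rule bdd_aboveI)
    fix z assume "z \<in> range (\<lambda>x. \<bar>Koop f x - f x\<bar>)"
    then obtain x where "z = \<bar>Koop f x - f x\<bar>" by blast
    then show "z \<le> 2 * B" using B[of x] B[of "shift x"] by (simp add: Koop_def)
  qed
  have Sb: "\<bar>f (shift x) - f x\<bar> \<le> S" for x
  proof -
    have "\<bar>Koop f x - f x\<bar> \<le> S" unfolding S_def supn_def by (rule cSUP_upper[OF _ bddK]) simp
    then show ?thesis by (simp add: Koop_def)
  qed
  have c1: "supn (\<lambda>x. f x - f (shift x)) = S"
  proof -
    have "(\<lambda>x. \<bar>f x - f (shift x)\<bar>) = (\<lambda>x. \<bar>Koop f x - f x\<bar>)"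
      by (simp add: fun_eq_iff Koop_def abs_minus_commute)
    then show ?thesis unfolding S_def supn_def by (rule arg_cong)
  qed
  have c2: "OP \<le> S"
  proof -
    have ne: "{v \<in> Hspace. Hnorm v \<le> 1} \<noteq> {}"
    proof -
      have "Hnorm ((\<lambda>_. 0), (\<lambda>_. 0)) = 0" by (simp add: Hnorm_def L2norm_def)
      then have "((\<lambda>_. 0), (\<lambda>_. 0)) \<in> {v \<in> Hspace. Hnorm v \<le> 1}" using zero_in_H by simp
      then show ?thesis by blast
    qed
    show ?thesis unfolding OP_def opnorm_def
      by (rule cSUP_least[OF ne]) (auto intro: upper[OF fm Sb])
  qed
  have c3: "R \<le> OP"
    unfolding R_def supn_def OP_def
    by (rule cSUP_least) (auto intro: lower[OF fc Sb])
  have c4: "S = R" if ind: "\<forall>x y. (\<forall>i\<ge>1. x i = y i) \<longrightarrow> f x = f y"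
  proof -
    have fc0: "f (cons_sym a x) = f (cons_sym False x)" for a x
      using ind by (auto simp: cons_sym_def split: nat.split)
    have fy: "f (cons_sym a (shift y)) = f y" for a y
      using ind by (auto simp: cons_sym_def shift_def split: nat.split)
    have sc: "shift (cons_sym a x) = x" for a x by (simp add: shift_def cons_sym_def)
    have "range (\<lambda>x. \<bar>Koop f x - f x\<bar>) = range (\<lambda>x. \<bar>f x - Ruelle f x\<bar>)"
    proof (intro equalityI subsetI)
      fix z assume "z \<in> range (\<lambda>x. \<bar>Koop f x - f x\<bar>)"
      then obtain y where z: "z = \<bar>Koop f y - f y\<bar>" by blast
      have "z = \<bar>f (shift y) - Ruelle f (shift y)\<bar>"
        using z fy[of False y] fy[of True y] by (simp add: Koop_def Ruelle_def)
      then show "z \<in> range (\<lambda>x. \<bar>f x - Ruelle f x\<bar>)" by blast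
    next
      fix z assume "z \<in> range (\<lambda>x. \<bar>f x - Ruelle f x\<bar>)"
      then obtain x where z: "z = \<bar>f x - Ruelle f x\<bar>" by blast
      have "z = \<bar>Koop f (cons_sym False x) - f (cons_sym False x)\<bar>"
        using z fc0[of True x] by (simp add: Koop_def Ruelle_def sc)
      then show "z \<in> range (\<lambda>x. \<bar>Koop f x - f x\<bar>)" by blast
    qed
    then show ?thesis by (simp add: S_def R_def supn_def)
  qed
  show ?thesis
    using c1 c2 c3 c4 unfolding S_def[symmetric] R_def[symmetric] OP_def[symmetric]
    by (smt (verit))
qed

end
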